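(* Let $a_2,a_3,b_2,b_3$ be nonzero real numbers such that $a_2b_2\neq -a_3b_3$ and $(a_2,b_2)\neq(-a_3,-b_3)$. Let $\xi_1,\xi_2,\xi_3,\xi_4$ be independent real-valued random variables whose characteristic functions vanish nowhere on $\mathbb{R}$, and assume $\xi_2$ and $\xi_3$ are identically distributed. Put $L_1=\xi_1+a_2\xi_2+a_3\xi_3$ and $L_2=b_2\xi_2+b_3\xi_3+\xi_4$. Let $\eta_1,\eta_2,\eta_3,\eta_4$ be any independent real-valued random variables whose characteristic functions vanish nowhere on $\mathbb{R}$, with $\eta_2$ and $\eta_3$ identically distributed, and put $M_1=\eta_1+a_2\eta_2+a_3\eta_3$, $M_2=b_2\eta_2+b_3\eta_3+\eta_4$. If the random vectors $(L_1,L_2)$ and $(M_1,M_2)$ have the same distribution, then there exist real numbers $\alpha_1,\alpha_2,\alpha_3,\alpha_4$ such that for each $j=1,2,3,4$ the distribution of $\eta_j$ equals the distribution of $\xi_j+\alpha_j$ (i.e. the distribution of $(L_1,L_2)$ determines the distributions of the $\xi_j$ up to shift). *)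

theory Defs
  imports "HOL-Probability.Probability"
begin

end

theory Submission
  imports Defs
begin


lemma cauchy_additive_linear:
  fixes f :: "real \<Rightarrow> complex"
  assumes cont: "continuous_on UNIV f" and add: "\<And>x y. f (x + y) = f x + f y"
  shows "f x = of_real x * f 1"
proof -
  define g where "g x = f x - of_real x * f 1" for x
  have gadd: "g (x + y) = g x + g y" for x y
    unfolding g_def using add[of x y] by (simp add: algebra_simps)
  have g0: "g 0 = 0" using gadd[of 0 0] by simp
  have g1: "g 1 = 0" unfolding g_def by simp
  have gneg: "g (- x) = - g x" for x
    using gadd[of x "-x"] g0 by (simp add: eq_neg_iff_add_eq_0 add.commute)
  have gnat: "g (of_nat n * x) = of_nat n * g x" for n x
    by (induction n) (simp_all add: g0 gadd algebra_simps)
  have gint: "g (of_int m) = 0" for m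
  proof (cases "m \<ge> 0")
    case True
    then obtain n where "m = int n" by (metis nonneg_eq_int)
    then show ?thesis using gnat[of n 1] g1 by simp
  next
    case False
    then obtain n where "m = - int n" by (metis nonneg_eq_int neg_0_le_iff_le linorder_le_cases minus_minus)
    then show ?thesis using gnat[of n 1] g1 gneg[of "of_nat n"] by simp
  qed
  have grat: "g q = 0" if qR: "q \<in> \<rat>" for q
  proof -
    obtain a b where ab: "b > 0" "q = of_int a / of_int b" by (rule Rats_cases'[OF qR]) auto
    obtain n where n: "b = int n" "n > 0" using ab(1) by (metis zero_less_imp_eq_int)
    have "of_int a = of_nat n * q" using ab n by simp
    then have "0 = of_nat n * g q" using gint[of a] gnat[of n q] by simp
    then show ?thesis using n(2) by simp
  qed
  have contg: "continuous_on UNIV g" unfolding g_def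
    by (intro continuous_intros cont)
  have cl: "closed {x. g x = 0}"
    using closed_Collect_eq[OF contg continuous_on_const] by simp
  have "closure \<rat> \<subseteq> {x. g x = 0}"
    by (rule closure_minimal) (use grat cl in auto)
  then have "g x = 0" using Rats_closure_real by auto
  then show ?thesis unfolding g_def by simp
qed

lemma cont_log0:
  fixes g :: "real \<Rightarrow> complex"
  assumes "continuous_on UNIV g" "\<And>x. g x \<noteq> 0" "g 0 = 1"
  obtains h where "continuous_on UNIV h" "h 0 = 0" "\<And>x. g x = exp (h x)"
proof -
  obtain h' where h': "continuous_on UNIV h'" "\<And>x. g x = exp (h' x)"
    using continuous_logarithm_on_contractible[of UNIV g] assms
    by (metis UNIV_I convex_UNIV convex_imp_contractible)
  have e0: "exp (h' 0) = 1" using h'(2)[of 0] assms(3) by simp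
  show ?thesis
  proof
    show "continuous_on UNIV (\<lambda>x. h' x - h' 0)" by (intro continuous_intros h')
    show "h' 0 - h' 0 = 0" by simp
    fix x show "g x = exp (h' x - h' 0)" using h'(2)[of x] e0 by (simp add: exp_diff)
  qed
qed

lemma exp_one_const:
  fixes H :: "'a::real_normed_vector \<Rightarrow> complex"
  assumes cont: "continuous_on UNIV H" and e: "\<And>x. exp (H x) = 1" and z: "H x0 = 0"
  shows "H x = 0"
proof -
  have "H constant_on UNIV"
  proof (rule continuous_discrete_range_constant[OF connected_UNIV cont])
    fix x :: 'a
    show "\<exists>e>0. \<forall>y. y \<in> UNIV \<and> H y \<noteq> H x \<longrightarrow> e \<le> norm (H y - H x)"
    proof (intro exI[of _ "2 * pi"] conjI allI impI)
      fix y assume "y \<in> UNIV \<and> H y \<noteq> H x"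
      then have ne: "H y \<noteq> H x" by simp
      have "exp (H y - H x) = 1" using e[of x] e[of y] by (simp add: exp_diff)
      then obtain n :: int where n: "Re (H y - H x) = 0" "Im (H y - H x) = of_int (2 * n) * pi"
        by (auto simp: exp_eq_1)
      have "n \<noteq> 0" using n ne by (auto simp: complex_eq_iff)
      then have "1 \<le> \<bar>real_of_int n\<bar>" by linarith
      have "norm (H y - H x) = \<bar>Im (H y - H x)\<bar>" using n(1) by (simp add: cmod_def)
      also have "\<dots> = 2 * pi * \<bar>real_of_int n\<bar>" using n(2) by (simp add: abs_mult)
      also have "\<dots> \<ge> 2 * pi" using \<open>1 \<le> \<bar>real_of_int n\<bar>\<close> by simp
      finally show "2 * pi \<le> norm (H y - H x)" .
    qed simp
  qed
  then show ?thesis using z unfolding constant_on_def by auto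
qed

lemma third_diff:
  fixes p ka kb :: "real \<Rightarrow> complex"
  assumes E: "\<And>u v. p u + p v = ka (al*u + be* v) + kb (ga*u + de* v)"
    and nz: "be \<noteq> 0" "de \<noteq> 0"
  shows "p (x+y+z) - p (x+y) - p (x+z) - p (y+z) + p x + p y + p z - p 0 = 0"
proof -
  define x' where "x' = - al*x/be"
  define y' where "y' = - ga*y/de"
  have x': "al*x + be*x' = 0" using nz unfolding x'_def by simp
  have y': "ga*y + de*y' = 0" using nz unfolding y'_def by simp
  define A where "A = al*y + be*y'"
  define B where "B = ga*x + de*x'"
  have a1: "al*(x+y)+be*(x'+y') = A" 
    proof - have "al*(x+y)+be*(x'+y') = (al*x + be*x') + A" unfolding A_def by (simp add: algebra_simps)
      then show ?thesis using x' by simp qed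
  have a2: "ga*(x+y)+de*(x'+y') = B" 
    proof - have "ga*(x+y)+de*(x'+y') = (ga*y + de*y') + B" unfolding B_def by (simp add: algebra_simps)
      then show ?thesis using y' by simp qed
  have a3: "al*(x+z)+be*x' = al*z"
    proof - have "al*(x+z)+be*x' = (al*x + be*x') + al*z" by (simp add: algebra_simps)
      then show ?thesis using x' by simp qed
  have a4: "ga*(x+z)+de*x' = B + ga*z" unfolding B_def by (simp add: algebra_simps)
  have a5: "al*(y+z)+be*y' = A + al*z" unfolding A_def by (simp add: algebra_simps)
  have a6: "ga*(y+z)+de*y' = ga*z"
    proof - have "ga*(y+z)+de*y' = (ga*y + de*y') + ga*z" by (simp add: algebra_simps)
      then show ?thesis using y' by simp qed
  have a7: "al*(x+y+z)+be*(x'+y') = A + al*z"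
    proof - have "al*(x+y+z)+be*(x'+y') = (al*x + be*x') + A + al*z" unfolding A_def by (simp add: algebra_simps)
      then show ?thesis using x' by simp qed
  have a8: "ga*(x+y+z)+de*(x'+y') = B + ga*z"
    proof - have "ga*(x+y+z)+de*(x'+y') = (ga*y + de*y') + B + ga*z" unfolding B_def by (simp add: algebra_simps)
      then show ?thesis using y' by simp qed
  have e000: "p 0 + p 0 = ka 0 + kb 0" using E[of 0 0] by simp
  have e100: "p x + p x' = ka 0 + kb B" using E[of x x'] x' B_def by simp
  have e010: "p y + p y' = ka A + kb 0" using E[of y y'] y' A_def by simp
  have e001: "p z + p 0 = ka (al*z) + kb (ga*z)" using E[of z 0] by simp
  have e110: "p (x+y) + p (x'+y') = ka A + kb B" using E[of "x+y" "x'+y'"] a1 a2 by simp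
  have e101: "p (x+z) + p x' = ka (al*z) + kb (B + ga*z)" using E[of "x+z" "x'"] a3 a4 by simp
  have e011: "p (y+z) + p y' = ka (A + al*z) + kb (ga*z)" using E[of "y+z" "y'"] a5 a6 by simp
  have e111: "p (x+y+z) + p (x'+y') = ka (A + al*z) + kb (B + ga*z)" using E[of "x+y+z" "x'+y'"] a7 a8 by simp
  show ?thesis
    using e000 e100 e010 e001 e110 e101 e011 e111
    unfolding complex_eq_iff by simp
qed

lemma cont_comp_UNIV:
  fixes p :: "real \<Rightarrow> complex"
  assumes "continuous_on UNIV p" "continuous_on UNIV f"
  shows "continuous_on UNIV (\<lambda>x. p (f x))"
  by (rule continuous_on_compose2[OF assms(1) assms(2)]) auto

lemma quad_form:
  fixes p :: "real \<Rightarrow> complex"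
  assumes pc: "continuous_on UNIV p" and p0: "p 0 = 0"
    and T: "\<And>x y z. p (x+y+z) - p (x+y) - p (x+z) - p (y+z) + p x + p y + p z - p 0 = 0"
  shows "\<exists>c d. \<forall>x. p x = of_real (x^2) * c + of_real x * d"
proof -
  define Q where "Q x y = p (x+y) - p x - p y" for x y
  have Qadd: "Q (x+z) y = Q x y + Q z y" for x y z
    using T[of x y z] p0 unfolding Q_def complex_eq_iff by (simp add: add_ac)
  have Qsym: "Q x y = Q y x" for x y unfolding Q_def by (simp add: add_ac)
  have Qc1: "continuous_on UNIV (\<lambda>x. Q x y)" for y
    unfolding Q_def by (intro continuous_intros cont_comp_UNIV[OF pc] pc)
  have Q1: "Q x y = of_real x * Q 1 y" for x y
    by (rule cauchy_additive_linear[OF Qc1 Qadd])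
  have Qc2: "continuous_on UNIV (\<lambda>y. Q 1 y)"
    unfolding Q_def by (intro continuous_intros cont_comp_UNIV[OF pc] pc)
  have Qadd2: "Q 1 (y+z) = Q 1 y + Q 1 z" for y z
    using Qadd[of y z 1] Qsym by metis
  have Q2: "Q 1 y = of_real y * Q 1 1" for y
    by (rule cauchy_additive_linear[OF Qc2 Qadd2])
  define c where "c = Q 1 1"
  have padd: "p (x+y) = p x + p y + of_real x * of_real y * c" for x y
  proof -
    have "Q x y = of_real x * of_real y * c" using Q1[of x y] Q2[of y] by (simp add: c_def)
    then have "p (x+y) - p x - p y = of_real x * of_real y * c" unfolding Q_def .
    then show ?thesis by (simp add: algebra_simps diff_diff_eq eq_diff_eq)
  qed
  define r where "r x = p x - of_real (x^2) * (c/2)" for x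
  have radd: "r (x+y) = r x + r y" for x y
    unfolding r_def padd by (simp add: algebra_simps power2_eq_square)
  have rc: "continuous_on UNIV r" unfolding r_def by (intro continuous_intros pc)
  have "p x = of_real (x^2) * (c/2) + of_real x * r 1" for x
    using cauchy_additive_linear[OF rc radd, of x] unfolding r_def[of x] by (simp add: algebra_simps)
  then show ?thesis by blast
qed

lemma scale_inv_zero:
  fixes m :: "real \<Rightarrow> complex"
  assumes mc: "continuous_on UNIV m" and m0: "m 0 = 0" and q: "\<bar>q\<bar> < 1"
    and inv: "\<And>w. m (q*w) = m w"
  shows "m w = 0"
proof -
  have mn: "m (q^n * w) = m w" for n
  proof (induction n)
    case (Suc n)
    have "m (q^Suc n * w) = m (q * (q^n * w))" by (simp add: mult.assoc)
    also have "\<dots> = m w" using inv Suc by simp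
    finally show ?case .
  qed simp
  have "(\<lambda>n. q^n * w) \<longlonglongrightarrow> 0"
    using LIMSEQ_power_zero[of q] q by (auto intro: tendsto_mult_left_zero)
  then have "(\<lambda>n. m (q^n * w)) \<longlonglongrightarrow> m 0"
    by (rule continuous_on_tendsto_compose[OF mc]) auto
  then have "(\<lambda>n. m w) \<longlonglongrightarrow> 0" using mn m0 by simp
  then show ?thesis by (simp add: LIMSEQ_const_iff)
qed




lemma fe_linear:
  fixes h1 h2 h4 :: "real \<Rightarrow> complex" and a2 a3 b2 b3 :: real
  assumes c1c: "continuous_on UNIV h1" and c2c: "continuous_on UNIV h2" and c4c: "continuous_on UNIV h4"
    and z1: "h1 0 = 0" and z2: "h2 0 = 0" and z4: "h4 0 = 0"
    and E: "\<And>s t. h1 s + h2 (a2* s+b2* t) + h2 (a3* s+b3* t) + h4 t = 0"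
    and nz: "a2 \<noteq> 0" "a3 \<noteq> 0" "b2 \<noteq> 0" "b3 \<noteq> 0"
    and c1: "a2 * b2 \<noteq> - (a3 * b3)"
    and c2: "(a2, b2) \<noteq> (- a3, - b3)"
  shows "\<exists>D. \<forall>x. h2 x = of_real x * D"
proof (cases "a2*b3 - a3*b2 = 0")
  case False
  define dt where "dt = a2*b3 - a3*b2"
  have dt: "dt \<noteq> 0" using False dt_def by simp
  define k1 where "k1 x = - h1 x" for x
  define k4 where "k4 x = - h4 x" for x
  have E2: "h2 u + h2 v = k1 ((b3/dt)*u + (-b2/dt)* v) + k4 ((-a3/dt)*u + (a2/dt)* v)" for u v
  proof -
    define s where "s = (b3/dt)*u + (-b2/dt)* v"
    define t where "t = (-a3/dt)*u + (a2/dt)* v"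
    have "(a2* s+b2* t) * dt = (a2*b3 - a3*b2)*u" unfolding s_def t_def using dt
      by (simp add: field_simps; simp add: algebra_simps)
    then have "a2* s+b2* t = u" using dt unfolding dt_def[symmetric] by simp
    moreover have "(a3* s+b3* t) * dt = (a2*b3 - a3*b2)* v" unfolding s_def t_def using dt
      by (simp add: field_simps; simp add: algebra_simps)
    then have "a3* s+b3* t = v" using dt unfolding dt_def[symmetric] by simp
    ultimately show ?thesis using E[of s t] unfolding k1_def k4_def s_def[symmetric] t_def[symmetric]
      unfolding complex_eq_iff by simp
  qed
  have T: "h2 (x+y+z) - h2 (x+y) - h2 (x+z) - h2 (y+z) + h2 x + h2 y + h2 z - h2 0 = 0" for x y z
    by (rule third_diff[where p=h2 and ka=k1 and kb=k4 and al="b3/dt" and be="-b2/dt" and ga="-a3/dt" and de="a2/dt", OF E2]) (use nz dt in auto)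
  obtain c d where pf: "\<And>x. h2 x = of_real (x^2) * c + of_real x * d"
    using quad_form[OF c2c z2 T] by blast
  have "h2 (a2+b2) + h2 (a3+b3) - h2 a2 - h2 a3 - h2 b2 - h2 b3 = 0"
    using E[of 1 0] E[of 0 1] E[of 1 1] z1 z4 unfolding complex_eq_iff by simp
  moreover have "h2 (a2+b2) + h2 (a3+b3) - h2 a2 - h2 a3 - h2 b2 - h2 b3
      = of_real (2*(a2*b2+a3*b3)) * c"
    unfolding pf by (simp add: algebra_simps power2_eq_square)
  ultimately have "of_real (2*(a2*b2+a3*b3)) * c = 0" by simp
  moreover have "2*(a2*b2+a3*b3) \<noteq> 0" 
  proof
    assume "2*(a2*b2+a3*b3) = 0"
    then have "a2*b2 + a3*b3 = 0" by simp
    then have "a2*b2 = - (a3*b3)" by (simp add: eq_neg_iff_add_eq_0)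
    with c1 show False by simp
  qed
  ultimately have "c = 0" by (metis mult_eq_0_iff of_real_eq_0_iff)
  then show ?thesis using pf by auto
next
  case True
  define lam where "lam = a3/a2"
  have a3e: "a3 = lam*a2" unfolding lam_def using nz by simp
  have "a2*b3 = a3*b2" using True by simp
  then have "b3 = a3*b2/a2" using nz by (simp add: eq_divide_eq mult.commute)
  then have b3e: "b3 = lam*b2" unfolding lam_def by simp
  have lamm1: "lam \<noteq> -1" using c2 a3e b3e by auto
  have lam0: "lam \<noteq> 0" using nz a3e by auto
  define k where "k w = h2 w + h2 (lam*w)" for w
  have E3: "h1 s + k (a2* s+b2* t) + h4 t = 0" for s t
    using E[of s t] unfolding k_def a3e b3e by (simp add: algebra_simps)
  have kadd: "k (x+y) = k x + k y" for x y
  proof -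
    have q1: "a2*(x/a2) + b2*(y/b2) = x+y" using nz by simp
    have q2: "a2*(x/a2) + b2*0 = x" using nz by simp
    have q3: "a2*0 + b2*(y/b2) = y" using nz by simp
    have e1: "h1 (x/a2) + k (x+y) + h4 (y/b2) = 0" using E3[of "x/a2" "y/b2"] unfolding q1 .
    have e2: "h1 (x/a2) + k x + h4 0 = 0" using E3[of "x/a2" 0] unfolding q2 .
    have e3: "h1 0 + k y + h4 (y/b2) = 0" using E3[of 0 "y/b2"] unfolding q3 .
    show ?thesis using e1 e2 e3 z1 z4 unfolding complex_eq_iff by simp
  qed
  have kc: "continuous_on UNIV k" unfolding k_def
    by (intro continuous_intros c2c cont_comp_UNIV[OF c2c])
  define C where "C = k 1"
  have kl: "k w = of_real w * C" for w unfolding C_def by (rule cauchy_additive_linear[OF kc kadd])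
  define m where "m w = h2 w - of_real w * (C / (1 + of_real lam))" for w
  have l1: "1 + complex_of_real lam \<noteq> 0"
    using lamm1 by (metis add.commute add_eq_0_iff of_real_1 of_real_eq_iff of_real_minus)
  have msum: "m w + m (lam*w) = 0" for w
  proof -
    have "m w + m (lam*w) = k w - (of_real w * (1 + of_real lam)) * (C / (1 + of_real lam))"
      unfolding m_def k_def by (simp add: algebra_simps)
    also have "\<dots> = k w - of_real w * C" using l1 by simp
    finally have "m w + m (lam*w) = k w - of_real w * C" .
    then show ?thesis using kl by simp
  qed
  have mc: "continuous_on UNIV m" unfolding m_def by (intro continuous_intros c2c)
  have m0: "m 0 = 0" unfolding m_def using z2 by simp
  have m2: "m (lam^2 * w) = m w" for w
  proof -
    have e: "m (lam^2*w) = m (lam*(lam*w))" by (simp add: power2_eq_square mult.assoc)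
    show ?thesis using msum[of w] msum[of "lam*w"] unfolding e complex_eq_iff by simp
  qed
  have mz: "m w = 0" for w
  proof (cases "\<bar>lam\<bar> < 1")
    case True
    then have "\<bar>lam^2\<bar> < 1" by (simp add: abs_square_less_1)
    then show ?thesis using scale_inv_zero[OF mc m0 _ m2] by blast
  next
    case False
    show ?thesis
    proof (cases "\<bar>lam\<bar> = 1")
      case True
      then have "lam = 1" using lamm1 by (auto simp: abs_if split: if_splits)
      then show ?thesis using msum[of w] by (simp add: complex_eq_iff)
    next
      case False2: False
      then have "\<bar>lam\<bar> > 1" using False by simp
      then have q: "\<bar>1/lam^2\<bar> < 1"
      proof -
        have "1 < \<bar>lam\<bar> * \<bar>lam\<bar>" using less_1_mult[OF \<open>\<bar>lam\<bar> > 1\<close> \<open>\<bar>lam\<bar> > 1\<close>] .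
        then have l2: "1 < lam^2" by (simp add: power2_eq_square)
        then have "1 / lam^2 < 1" by (simp add: divide_less_eq_1)
        moreover have "0 < 1 / lam^2" using lam0 by simp
        ultimately show ?thesis by simp
      qed
      have "m (1/lam^2 * w) = m w" for w
        using m2[of "1/lam^2 * w"] lam0 by simp
      then show ?thesis using scale_inv_zero[OF mc m0 q] by blast
    qed
  qed
  have "h2 x = of_real x * (C / (1 + of_real lam))" for x using mz[of x] unfolding m_def by simp
  then show ?thesis by blast
qed



lemma char_distr_scale:
  assumes "X \<in> borel_measurable M"
  shows "char (distr M borel (\<lambda>\<omega>. c * X \<omega>)) t = char (distr M borel X) (c * t)"
  using assms by (simp add: char_def integral_distr mult.assoc mult.left_commute)

lemma char_distr_shift:
  assumes "X \<in> borel_measurable M"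
  shows "char (distr M borel (\<lambda>\<omega>. X \<omega> + a)) t = iexp (t * a) * char (distr M borel X) t"
proof -
  have "char (distr M borel (\<lambda>\<omega>. X \<omega> + a)) t = (CLINT \<omega>|M. iexp (t * a) * iexp (t * X \<omega>))"
    using assms by (simp add: char_def integral_distr distrib_left exp_add mult.commute)
  also have "\<dots> = iexp (t * a) * char (distr M borel X) t"
    using assms by (simp add: char_def integral_distr)
  finally show ?thesis .
qed

lemma char_neg: "char \<mu> (- t) = cnj (char \<mu> t)"
proof -
  have "cnj (char \<mu> t) = (CLINT x|\<mu>. cnj (iexp (t * x)))" unfolding char_def by simp
  also have "\<dots> = char \<mu> (-t)" unfolding char_def by (simp add: exp_cnj)
  finally show ?thesis ..
qed

lemma re_zero_from_char:
  assumes "\<And>x. char \<nu> x = exp (of_real x * E) * char \<mu> x" and "char \<mu> 1 \<noteq> 0"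
  shows "Re E = 0"
proof -
  have n1: "norm (char \<nu> 1) = exp (Re E) * norm (char \<mu> 1)"
    using assms(1)[of 1] by (simp add: norm_mult)
  have n2: "norm (char \<nu> (-1)) = exp (- Re E) * norm (char \<mu> (-1))"
    using assms(1)[of "-1"] by (simp add: norm_mult)
  have "exp (Re E) * norm (char \<mu> 1) = exp (- Re E) * norm (char \<mu> 1)"
    using n1 n2 char_neg[of \<nu> 1] char_neg[of \<mu> 1] by simp
  then have "exp (Re E) = exp (- Re E)" using assms(2) by simp
  then show ?thesis by simp
qed

lemma char_comb:
  fixes X :: "nat \<Rightarrow> 'a \<Rightarrow> real"
  assumes PM: "prob_space M" and ind: "prob_space.indep_vars M (\<lambda>_. borel) X {1..4}"
  shows "char (distr M borel (\<lambda>\<omega>. s * (X 1 \<omega> + a2 * X 2 \<omega> + a3 * X 3 \<omega>) + t * (b2 * X 2 \<omega> + b3 * X 3 \<omega> + X 4 \<omega>))) 1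
    = char (distr M borel (X 1)) s * char (distr M borel (X 2)) (a2* s+b2* t)
      * char (distr M borel (X 3)) (a3* s+b3* t) * char (distr M borel (X 4)) t"
proof -
  interpret prob_space M by fact
  have meas: "X j \<in> borel_measurable M" if "j \<in> {1..4}" for j
    using ind that unfolding indep_vars_def by auto
  define c where "c j = (if j = 1 then s else if j = 2 then a2* s+b2* t else if j = 3 then a3* s+b3* t else t)" for j :: nat
  have ind2: "indep_vars (\<lambda>_. borel) (\<lambda>j \<omega>. c j * X j \<omega>) {1..4}"
    by (rule indep_vars_compose2[OF ind]) auto
  have S: "{1..4::nat} = {1,2,3,4}" by auto
  have fe: "(\<lambda>\<omega>. \<Sum>j\<in>{1..4}. c j * X j \<omega>) =
    (\<lambda>\<omega>. s * (X 1 \<omega> + a2 * X 2 \<omega> + a3 * X 3 \<omega>) + t * (b2 * X 2 \<omega> + b3 * X 3 \<omega> + X 4 \<omega>))"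
    unfolding S by (auto simp: c_def algebra_simps)
  have "char (distr M borel (\<lambda>\<omega>. \<Sum>j\<in>{1..4}. c j * X j \<omega>)) 1
      = (\<Prod>j\<in>{1..4}. char (distr M borel (\<lambda>\<omega>. c j * X j \<omega>)) 1)"
    by (rule char_distr_sum[OF ind2])
  also have "\<dots> = (\<Prod>j\<in>{1..4}. char (distr M borel (X j)) (c j))"
    by (rule prod.cong) (auto simp: char_distr_scale meas)
  also have "\<dots> = char (distr M borel (X 1)) s * char (distr M borel (X 2)) (a2* s+b2* t)
      * char (distr M borel (X 3)) (a3* s+b3* t) * char (distr M borel (X 4)) t"
    unfolding S by (simp add: c_def mult.assoc)
  finally show ?thesis unfolding fe .
qed

lemma finish_shift:
  fixes X :: "'a \<Rightarrow> real" and Y :: "'b \<Rightarrow> real"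
  assumes PM: "prob_space M" and PN: "prob_space N"
    and mX: "X \<in> borel_measurable M" and mY: "Y \<in> borel_measurable N"
    and rel: "\<And>x. char (distr N borel Y) x = exp (of_real x * E) * char (distr M borel X) x"
    and nz: "char (distr M borel X) 1 \<noteq> 0"
  shows "distr N borel Y = distr M borel (\<lambda>\<omega>. X \<omega> + Im E)"
proof -
  interpret M: prob_space M by fact
  interpret N: prob_space N by fact
  have re: "Re E = 0" by (rule re_zero_from_char[OF rel nz])
  have Ee: "E = \<i> * of_real (Im E)" using re by (simp add: complex_eq_iff)
  show ?thesis
  proof (rule Levy_uniqueness)
    show "real_distribution (distr N borel Y)" using mY by simp
    show "real_distribution (distr M borel (\<lambda>\<omega>. X \<omega> + Im E))" using mX by simp
    show "char (distr N borel Y) = char (distr M borel (\<lambda>\<omega>. X \<omega> + Im E))"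
    proof
      fix x
      have "char (distr N borel Y) x = iexp (x * Im E) * char (distr M borel X) x"
        using rel[of x] by (subst (asm) Ee) (simp add: mult_ac)
      also have "\<dots> = char (distr M borel (\<lambda>\<omega>. X \<omega> + Im E)) x"
        using char_distr_shift[OF mX] by simp
      finally show "char (distr N borel Y) x = char (distr M borel (\<lambda>\<omega>. X \<omega> + Im E)) x" .
    qed
  qed
qed

theorem theorem2p1:
  fixes M :: "'a measure" and N :: "'b measure"
    and X :: "nat \<Rightarrow> 'a \<Rightarrow> real" and Y :: "nat \<Rightarrow> 'b \<Rightarrow> real"
    and a2 a3 b2 b3 :: real
  assumes nz: "a2 \<noteq> 0" "a3 \<noteq> 0" "b2 \<noteq> 0" "b3 \<noteq> 0"
    and c1: "a2 * b2 \<noteq> - (a3 * b3)"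
    and c2: "(a2, b2) \<noteq> (- a3, - b3)"
    and PM: "prob_space M" and PN: "prob_space N"
    and indX: "prob_space.indep_vars M (\<lambda>_. borel) X {1..4}"
    and indY: "prob_space.indep_vars N (\<lambda>_. borel) Y {1..4}"
    and charX: "\<And>j t. j \<in> {1..4} \<Longrightarrow> char (distr M borel (X j)) t \<noteq> 0"
    and charY: "\<And>j t. j \<in> {1..4} \<Longrightarrow> char (distr N borel (Y j)) t \<noteq> 0"
    and idX: "distr M borel (X 2) = distr M borel (X 3)"
    and idY: "distr N borel (Y 2) = distr N borel (Y 3)"
    and same: "distr M borel (\<lambda>\<omega>. (X 1 \<omega> + a2 * X 2 \<omega> + a3 * X 3 \<omega>,
                                     b2 * X 2 \<omega> + b3 * X 3 \<omega> + X 4 \<omega>))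
             = distr N borel (\<lambda>\<omega>. (Y 1 \<omega> + a2 * Y 2 \<omega> + a3 * Y 3 \<omega>,
                                     b2 * Y 2 \<omega> + b3 * Y 3 \<omega> + Y 4 \<omega>))"
  shows "\<exists>\<alpha> :: nat \<Rightarrow> real. \<forall>j \<in> {1..4}.
           distr N borel (Y j) = distr M borel (\<lambda>\<omega>. X j \<omega> + \<alpha> j)"
proof -
  interpret M: prob_space M by fact
  interpret N: prob_space N by fact
  have mX: "X j \<in> borel_measurable M" if "j \<in> {1..4}" for j
    using indX that unfolding M.indep_vars_def by auto
  have mY: "Y j \<in> borel_measurable N" if "j \<in> {1..4}" for j
    using indY that unfolding N.indep_vars_def by auto
  define \<phi> where "\<phi> j = char (distr M borel (X j))" for j
  define \<psi> where "\<psi> j = char (distr N borel (Y j))" for j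
  have mX1 [measurable]: "X 1 \<in> borel_measurable M" and mX2 [measurable]: "X 2 \<in> borel_measurable M"
    and mX3 [measurable]: "X 3 \<in> borel_measurable M" and mX4 [measurable]: "X 4 \<in> borel_measurable M"
    using mX by auto
  have mY1 [measurable]: "Y 1 \<in> borel_measurable N" and mY2 [measurable]: "Y 2 \<in> borel_measurable N"
    and mY3 [measurable]: "Y 3 \<in> borel_measurable N" and mY4 [measurable]: "Y 4 \<in> borel_measurable N"
    using mY by auto
  have joint: "char (distr M borel (\<lambda>\<omega>. s * (X 1 \<omega> + a2 * X 2 \<omega> + a3 * X 3 \<omega>) + t * (b2 * X 2 \<omega> + b3 * X 3 \<omega> + X 4 \<omega>))) 1
      = char (distr N borel (\<lambda>\<omega>. s * (Y 1 \<omega> + a2 * Y 2 \<omega> + a3 * Y 3 \<omega>) + t * (b2 * Y 2 \<omega> + b3 * Y 3 \<omega> + Y 4 \<omega>))) 1" for s t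
  proof -
    let ?f = "\<lambda>p::real\<times>real. s * fst p + t * snd p"
    have fm[measurable]: "?f \<in> borel_measurable borel" by (intro borel_measurable_continuous_onI continuous_intros)
    have pmX: "(\<lambda>\<omega>. (X 1 \<omega> + a2 * X 2 \<omega> + a3 * X 3 \<omega>, b2 * X 2 \<omega> + b3 * X 3 \<omega> + X 4 \<omega>)) \<in> borel_measurable M"
      by measurable
    have pmY: "(\<lambda>\<omega>. (Y 1 \<omega> + a2 * Y 2 \<omega> + a3 * Y 3 \<omega>, b2 * Y 2 \<omega> + b3 * Y 3 \<omega> + Y 4 \<omega>)) \<in> borel_measurable N"
      by measurable
    have "distr M borel (\<lambda>\<omega>. s * (X 1 \<omega> + a2 * X 2 \<omega> + a3 * X 3 \<omega>) + t * (b2 * X 2 \<omega> + b3 * X 3 \<omega> + X 4 \<omega>))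
       = distr (distr M borel (\<lambda>\<omega>. (X 1 \<omega> + a2 * X 2 \<omega> + a3 * X 3 \<omega>,
                                     b2 * X 2 \<omega> + b3 * X 3 \<omega> + X 4 \<omega>))) borel ?f"
      by (subst distr_distr[OF fm pmX]) (simp add: comp_def)
    also have "\<dots> = distr (distr N borel (\<lambda>\<omega>. (Y 1 \<omega> + a2 * Y 2 \<omega> + a3 * Y 3 \<omega>,
                                     b2 * Y 2 \<omega> + b3 * Y 3 \<omega> + Y 4 \<omega>))) borel ?f"
      using same by simp
    also have "\<dots> = distr N borel (\<lambda>\<omega>. s * (Y 1 \<omega> + a2 * Y 2 \<omega> + a3 * Y 3 \<omega>) + t * (b2 * Y 2 \<omega> + b3 * Y 3 \<omega> + Y 4 \<omega>))"
      by (subst distr_distr[OF fm pmY]) (simp add: comp_def)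
    finally show ?thesis by simp
  qed
  have Eq: "\<phi> 1 s * \<phi> 2 (a2* s+b2* t) * \<phi> 2 (a3* s+b3* t) * \<phi> 4 t
          = \<psi> 1 s * \<psi> 2 (a2* s+b2* t) * \<psi> 2 (a3* s+b3* t) * \<psi> 4 t" for s t
    using joint[of s t] char_comb[OF PM indX, of s a2 a3 t b2 b3] char_comb[OF PN indY, of s a2 a3 t b2 b3]
    unfolding \<phi>_def \<psi>_def idX idY by simp
  have \<phi>nz: "\<phi> j x \<noteq> 0" if "j \<in> {1..4}" for j x using charX that unfolding \<phi>_def by auto
  have \<psi>nz: "\<psi> j x \<noteq> 0" if "j \<in> {1..4}" for j x using charY that unfolding \<psi>_def by auto
  have \<phi>c: "continuous_on UNIV (\<phi> j)" if "j \<in> {1..4}" for j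
    unfolding \<phi>_def using real_distribution.isCont_char[OF M.real_distribution_distr[OF mX[OF that]]]
    by (simp add: continuous_at_imp_continuous_on)
  have \<psi>c: "continuous_on UNIV (\<psi> j)" if "j \<in> {1..4}" for j
    unfolding \<psi>_def using real_distribution.isCont_char[OF N.real_distribution_distr[OF mY[OF that]]]
    by (simp add: continuous_at_imp_continuous_on)
  have \<phi>0: "\<phi> j 0 = 1" if "j \<in> {1..4}" for j
    unfolding \<phi>_def using real_distribution.char_zero[OF M.real_distribution_distr[OF mX[OF that]]] .
  have \<psi>0: "\<psi> j 0 = 1" if "j \<in> {1..4}" for j
    unfolding \<psi>_def using real_distribution.char_zero[OF N.real_distribution_distr[OF mY[OF that]]] .
  define g where "g j x = \<psi> j x / \<phi> j x" for j x
  have gc: "continuous_on UNIV (g j)" if "j \<in> {1..4}" for j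
    unfolding g_def[abs_def] using \<phi>c[OF that] \<psi>c[OF that] \<phi>nz[OF that]
    by (intro continuous_intros) auto
  have gnz: "g j x \<noteq> 0" if "j \<in> {1..4}" for j x
    unfolding g_def using \<phi>nz[OF that] \<psi>nz[OF that] by simp
  have g0: "g j 0 = 1" if "j \<in> {1..4}" for j
    unfolding g_def using \<phi>0[OF that] \<psi>0[OF that] by simp
  obtain h1 where h1: "continuous_on UNIV h1" "h1 0 = 0" "\<And>x. g 1 x = exp (h1 x)"
    using cont_log0[OF gc gnz g0, of 1] by auto
  obtain h2 where h2: "continuous_on UNIV h2" "h2 0 = 0" "\<And>x. g 2 x = exp (h2 x)"
    using cont_log0[OF gc gnz g0, of 2] by auto
  obtain h4 where h4: "continuous_on UNIV h4" "h4 0 = 0" "\<And>x. g 4 x = exp (h4 x)"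
    using cont_log0[OF gc gnz g0, of 4] by auto
  define H where "H p = h1 (fst p) + h2 (a2 * fst p + b2 * snd p) + h2 (a3 * fst p + b3 * snd p) + h4 (snd p)"
    for p :: "real \<times> real"
  have Hc: "continuous_on UNIV H" unfolding H_def[abs_def]
    by (intro continuous_intros cont_comp_UNIV[OF h1(1)] cont_comp_UNIV[OF h2(1)] cont_comp_UNIV[OF h4(1)])
  have He: "exp (H p) = 1" for p
  proof -
    obtain s t where p: "p = (s, t)" by fastforce
    have "exp (H p) = g 1 s * g 2 (a2* s+b2* t) * g 2 (a3* s+b3* t) * g 4 t"
      unfolding H_def p h1(3) h2(3) h4(3) by (simp add: exp_add)
    also have "\<dots> = (\<psi> 1 s * \<psi> 2 (a2* s+b2* t) * \<psi> 2 (a3* s+b3* t) * \<psi> 4 t)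
        / (\<phi> 1 s * \<phi> 2 (a2* s+b2* t) * \<phi> 2 (a3* s+b3* t) * \<phi> 4 t)"
      unfolding g_def by simp
    also have "\<dots> = 1" using Eq[of s t] \<phi>nz[of 1] \<phi>nz[of 2] \<phi>nz[of 4] \<psi>nz[of 1] \<psi>nz[of 2] \<psi>nz[of 4] by simp
    finally show ?thesis .
  qed
  have H0: "H (0, 0) = 0" unfolding H_def using h1(2) h2(2) h4(2) by simp
  have E: "h1 s + h2 (a2 * s + b2 * t) + h2 (a3 * s + b3 * t) + h4 t = 0" for s t
    using exp_one_const[OF Hc He H0, of "(s, t)"] unfolding H_def by simp
  obtain D where D: "\<And>x. h2 x = of_real x * D"
    using fe_linear[OF h1(1) h2(1) h4(1) h1(2) h2(2) h4(2) E nz c1 c2] by blast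
  have h1l: "h1 x = of_real x * (- (of_real a2 + of_real a3) * D)" for x
    using E[of x 0] h4(2) D[of "a2*x"] D[of "a3*x"] unfolding complex_eq_iff by (simp add: algebra_simps)
  have h4l: "h4 x = of_real x * (- (of_real b2 + of_real b3) * D)" for x
    using E[of 0 x] h1(2) D[of "b2*x"] D[of "b3*x"] unfolding complex_eq_iff by (simp add: algebra_simps)
  have rel: "\<psi> j x = exp (of_real x * E) * \<phi> j x" 
    if "j \<in> {1..4}" "\<And>x. g j x = exp (of_real x * E)" for j x E
    using that(2)[of x] \<phi>nz[OF that(1)] unfolding g_def by (simp add: divide_eq_eq)
  define \<alpha> where "\<alpha> j = (if j = 1 then Im (- (of_real a2 + of_real a3) * D)
     else if j = 4 then Im (- (of_real b2 + of_real b3) * D) else Im D)" for j :: nat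
  show ?thesis
  proof (intro exI[of _ \<alpha>] ballI)
    fix j :: nat assume j: "j \<in> {1..4}"
    then have "j = 1 \<or> j = 2 \<or> j = 3 \<or> j = 4" by auto
    then show "distr N borel (Y j) = distr M borel (\<lambda>\<omega>. X j \<omega> + \<alpha> j)"
    proof (elim disjE)
      assume j1: "j = 1"
      have aj: "\<alpha> 1 = Im (- (of_real a2 + of_real a3) * D)" unfolding \<alpha>_def by simp
      show ?thesis unfolding j1 aj
        by (rule finish_shift[OF PM PN mX1 mY1]) (use rel[of 1, OF _ h1(3)[unfolded h1l]] \<phi>nz[of 1 1] in \<open>auto simp: \<phi>_def \<psi>_def\<close>)
    next
      assume j2: "j = 2"
      have aj: "\<alpha> 2 = Im D" unfolding \<alpha>_def by simp
      show ?thesis unfolding j2 aj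
        by (rule finish_shift[OF PM PN mX2 mY2]) (use rel[of 2, OF _ h2(3)[unfolded D]] \<phi>nz[of 2 1] in \<open>auto simp: \<phi>_def \<psi>_def\<close>)
    next
      assume j3: "j = 3"
      have aj: "\<alpha> 3 = Im D" unfolding \<alpha>_def by simp
      show ?thesis unfolding j3 aj
        by (rule finish_shift[OF PM PN mX3 mY3]) (use rel[of 2, OF _ h2(3)[unfolded D]] \<phi>nz[of 2 1] in \<open>auto simp: \<phi>_def \<psi>_def idX idY\<close>)
    next
      assume j4: "j = 4"
      have aj: "\<alpha> 4 = Im (- (of_real b2 + of_real b3) * D)" unfolding \<alpha>_def by simp
      show ?thesis unfolding j4 aj
        by (rule finish_shift[OF PM PN mX4 mY4]) (use rel[of 4, OF _ h4(3)[unfolded h4l]] \<phi>nz[of 4 1] in \<open>auto simp: \<phi>_def \<psi>_def\<close>)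
    qed
  qed
qed


end
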